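(* Let $s=(s_1,\ldots,s_n)$ be a sequence of positive integers and let $F$ be a nonempty face of the $s$-lecture hall simplex $P_n^s$, of dimension $m$. Then $\ell^\ast(F;z)=d_m^\mu(z)$ for some sequence $\mu=(\mu_1,\ldots,\mu_m)$ of positive integers.
   Context: For a sequence $t=(t_1,\ldots,t_m)$ of positive integers, $P_m^t=\{x\in\mathbb{R}^m:0\le x_1/t_1\le\cdots\le x_m/t_m\le1\}$ (a point when $m=0$), and $d_m^t(z)=\ell^\ast(P_m^t;z)$. For a lattice $d$-simplex $\Delta=\mathrm{conv}(v^{(0)},\ldots,v^{(d)})\subset\mathbb{R}^N$, $\ell^\ast(\Delta;z)=\sum_{x\in\Pi^\circ_\Delta\cap\mathbb{Z}^{N+1}}z^{x_{N+1}}$, where $\Pi^\circ_\Delta=\{\sum_i\lambda_i(v^{(i)},1):0<\lambda_i<1\}$. *)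

theory Defs
  imports "HOL-Analysis.Analysis" "HOL-Computational_Algebra.Polynomial"
begin

definition lecture_hall :: "('n::{finite,linorder} \<Rightarrow> nat) \<Rightarrow> (real^('n::{finite,linorder})) set" where
  "lecture_hall s = {x. (\<forall>i. 0 \<le> x$i / real (s i) \<and> x$i / real (s i) \<le> 1) \<and>
                        (\<forall>i j. i \<le> j \<longrightarrow> x$i / real (s i) \<le> x$j / real (s j))}"

text \<open>P_m^t in R^m, realised inside nat => real: coordinates 0..m-1 carry
  x_1..x_m, all other coordinates are 0.  For m = 0 this is a single point.\<close>
definition lecture_hall_nat :: "nat \<Rightarrow> (nat \<Rightarrow> nat) \<Rightarrow> (nat \<Rightarrow> real) set" where
  "lecture_hall_nat m t = {x. (\<forall>i. m \<le> i \<longrightarrow> x i = 0) \<and>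
      (\<forall>i<m. 0 \<le> x i / real (t i) \<and> x i / real (t i) \<le> 1) \<and>
      (\<forall>i j. i \<le> j \<and> j < m \<longrightarrow> x i / real (t i) \<le> x j / real (t j))}"

text \<open>Extreme points of a set of coordinate functions (literal unfolding of
  extreme_point_of: not in the open segment between two points of S).\<close>
definition ext_pts :: "('i \<Rightarrow> real) set \<Rightarrow> ('i \<Rightarrow> real) set" where
  "ext_pts S = {x \<in> S. \<not> (\<exists>a\<in>S. \<exists>b\<in>S. \<exists>u::real. a \<noteq> b \<and> 0 < u \<and> u < 1 \<and>
                                     x = (\<lambda>i. (1 - u) * a i + u * b i))}"

text \<open>l^*(Delta; z) for the lattice simplex with vertex set V:
  sum of z^h over lattice points (x,h) of the open parallelepiped
  { sum_v lambda_v (v,1) : 0 < lambda_v < 1 }.\<close>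
definition lstar :: "('i \<Rightarrow> real) set \<Rightarrow> int poly" where
  "lstar V = (\<Sum>p \<in> {(x, h). (\<forall>i. x i \<in> \<int>) \<and> h \<in> \<int> \<and>
        (\<exists>l. (\<forall>v\<in>V. 0 < l v \<and> l v < 1) \<and>
             x = (\<lambda>i. \<Sum>v\<in>V. l v * v i) \<and> h = (\<Sum>v\<in>V. l v))}.
      monom 1 (nat \<lfloor>snd p\<rfloor>))"

definition ell_star :: "(real^'n) set \<Rightarrow> int poly" where
  "ell_star S = lstar ((\<lambda>v. vec_nth v) ` {v. v extreme_point_of S})"

definition d_poly :: "nat \<Rightarrow> (nat \<Rightarrow> nat) \<Rightarrow> int poly" where
  "d_poly m t = lstar (ext_pts (lecture_hall_nat m t))"

end

theory Submission
  imports Defs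
begin


definition Lam :: "(nat \<Rightarrow> 'i \<Rightarrow> real) \<Rightarrow> nat \<Rightarrow> (nat \<Rightarrow> real) set" where
  "Lam g m = {l. (\<forall>k. m < k \<longrightarrow> l k = 0) \<and> (\<forall>k\<le>m. 0 < l k \<and> l k < 1) \<and>
     (\<forall>i. (\<Sum>k\<le>m. l k * g k i) \<in> \<int>) \<and> (\<Sum>k\<le>m. l k) \<in> \<int>}"

lemma lstar_param:
  fixes g :: "nat \<Rightarrow> 'i \<Rightarrow> real"
  assumes inj: "inj_on g {..m}" and V: "V = g ` {..m}"
    and indep: "\<And>a. (\<forall>i. (\<Sum>k\<le>m. a k * g k i) = 0) \<Longrightarrow> (\<Sum>k\<le>m. a k) = 0 \<Longrightarrow> \<forall>k\<le>m. a k = 0"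
  shows "lstar V = (\<Sum>l\<in>Lam g m. monom 1 (nat \<lfloor>\<Sum>k\<le>m. l k\<rfloor>))"
proof -
  define \<Phi> where "\<Phi> = (\<lambda>l::nat\<Rightarrow>real. ((\<lambda>i. \<Sum>k\<le>m. l k * g k i), (\<Sum>k\<le>m. l k)))"
  have sumV: "(\<Sum>v\<in>V. f v) = (\<Sum>k\<le>m. f (g k))" for f :: "('i \<Rightarrow> real) \<Rightarrow> real"
    unfolding V using sum.reindex[OF inj] by simp
  have seteq: "{(x, h). (\<forall>i. x i \<in> \<int>) \<and> h \<in> \<int> \<and>
        (\<exists>l. (\<forall>v\<in>V. 0 < l v \<and> l v < 1) \<and>
             x = (\<lambda>i. \<Sum>v\<in>V. l v * v i) \<and> h = (\<Sum>v\<in>V. l v))} = \<Phi> ` Lam g m"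
  proof (intro set_eqI iffI)
    fix p assume "p \<in> {(x, h). (\<forall>i. x i \<in> \<int>) \<and> h \<in> \<int> \<and>
        (\<exists>l. (\<forall>v\<in>V. 0 < l v \<and> l v < 1) \<and>
             x = (\<lambda>i. \<Sum>v\<in>V. l v * v i) \<and> h = (\<Sum>v\<in>V. l v))}"
    then obtain x h l where p: "p = (x, h)" and xi: "\<forall>i. x i \<in> \<int>" and hi: "h \<in> \<int>"
      and lv: "\<forall>v\<in>V. 0 < l v \<and> l v < 1" and x: "x = (\<lambda>i. \<Sum>v\<in>V. l v * v i)"
      and h: "h = (\<Sum>v\<in>V. l v)" by blast
    define l' where "l' = (\<lambda>k. if k \<le> m then l (g k) else 0)"
    have e1: "(\<Sum>k\<le>m. l' k * g k i) = x i" for i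
      unfolding x sumV l'_def by simp
    have e2: "(\<Sum>k\<le>m. l' k) = h"
      unfolding h sumV l'_def by simp
    have "l' \<in> Lam g m"
      unfolding Lam_def using e1 e2 xi hi lv V by (auto simp: l'_def)
    moreover have "p = \<Phi> l'" unfolding p \<Phi>_def using e1 e2 by auto
    ultimately show "p \<in> \<Phi> ` Lam g m" by blast
  next
    fix p assume "p \<in> \<Phi> ` Lam g m"
    then obtain l' where l': "l' \<in> Lam g m" and p: "p = \<Phi> l'" by blast
    define l where "l = (\<lambda>v. l' (inv_into {..m} g v))"
    have lg: "l (g k) = l' k" if "k \<le> m" for k
      unfolding l_def using inv_into_f_f[OF inj] that by simp
    have "(\<forall>v\<in>V. 0 < l v \<and> l v < 1)" using l' lg unfolding V Lam_def by auto
    moreover have pw: "\<And>i. (\<Sum>k\<le>m. l' k * g k i) = (\<Sum>v\<in>V. l v * v i)"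
      unfolding sumV using lg by simp
    moreover have "(\<Sum>k\<le>m. l' k) = (\<Sum>v\<in>V. l v)"
      unfolding sumV using lg by simp
    ultimately show "p \<in> {(x, h). (\<forall>i. x i \<in> \<int>) \<and> h \<in> \<int> \<and>
        (\<exists>l. (\<forall>v\<in>V. 0 < l v \<and> l v < 1) \<and>
             x = (\<lambda>i. \<Sum>v\<in>V. l v * v i) \<and> h = (\<Sum>v\<in>V. l v))}"
    proof -
      have "\<forall>i. (\<Sum>v\<in>V. l v * v i) \<in> \<int>" using l' pw unfolding Lam_def by (metis (no_types, lifting) mem_Collect_eq)
      moreover have "(\<Sum>v\<in>V. l v) \<in> \<int>" using l' \<open>(\<Sum>k\<le>m. l' k) = (\<Sum>v\<in>V. l v)\<close> unfolding Lam_def by (metis (no_types, lifting) mem_Collect_eq)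
      ultimately show ?thesis using \<open>(\<forall>v\<in>V. 0 < l v \<and> l v < 1)\<close> \<open>(\<Sum>k\<le>m. l' k) = (\<Sum>v\<in>V. l v)\<close> pw
        unfolding p \<Phi>_def by auto
    qed
  qed
  have injP: "inj_on \<Phi> (Lam g m)"
  proof (rule inj_onI)
    fix l1 l2 assume l1: "l1 \<in> Lam g m" and l2: "l2 \<in> Lam g m" and eq: "\<Phi> l1 = \<Phi> l2"
    define a where "a = (\<lambda>k. l1 k - l2 k)"
    have "\<forall>i. (\<Sum>k\<le>m. a k * g k i) = 0"
    proof
      fix i
      have "(\<Sum>k\<le>m. l1 k * g k i) = (\<Sum>k\<le>m. l2 k * g k i)" using eq unfolding \<Phi>_def
        by (metis (no_types, lifting) fst_conv)
      then show "(\<Sum>k\<le>m. a k * g k i) = 0"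
        unfolding a_def by (simp add: left_diff_distrib sum_subtractf)
    qed
    moreover have "(\<Sum>k\<le>m. a k) = 0" using eq unfolding \<Phi>_def a_def by (simp add: sum_subtractf)
    ultimately have "\<forall>k\<le>m. a k = 0" by (rule indep)
    then show "l1 = l2"
    proof (intro ext)
      fix k assume a0: "\<forall>k\<le>m. a k = 0"
      show "l1 k = l2 k"
      proof (cases "k \<le> m")
        case True then show ?thesis using a0 unfolding a_def by auto
      next
        case False then show ?thesis using l1 l2 unfolding Lam_def by auto
      qed
    qed
  qed
  show ?thesis
    unfolding lstar_def seteq sum.reindex[OF injP]
    by (simp add: \<Phi>_def)
qed



lemma struct_sum:
  fixes g :: "nat \<Rightarrow> 'i \<Rightarrow> real"
  assumes gs: "\<forall>k\<le>m. \<forall>i. g k i = (if k < \<rho> i then real (c i) else 0)"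
    and rb: "\<rho> i \<le> Suc m"
  shows "(\<Sum>k\<le>m. l k * g k i) = real (c i) * (\<Sum>k<\<rho> i. l k)"
proof -
  have "(\<Sum>k\<le>m. l k * g k i) = (\<Sum>k\<le>m. if k < \<rho> i then real (c i) * l k else 0)"
    by (rule sum.cong) (use gs in auto)
  also have "\<dots> = (\<Sum>k\<in>{..m} \<inter> {k. k < \<rho> i}. real (c i) * l k)"
    by (simp add: sum.inter_restrict)
  also have "{..m} \<inter> {k. k < \<rho> i} = {..<\<rho> i}" using rb by auto
  finally show ?thesis by (simp add: sum_distrib_left)
qed

lemma partial_sums_zero:
  fixes a :: "nat \<Rightarrow> real"
  assumes "\<forall>r. 1 \<le> r \<and> r \<le> Suc m \<longrightarrow> (\<Sum>k<r. a k) = 0"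
  shows "\<forall>k\<le>m. a k = 0"
proof (intro allI impI)
  fix k assume k: "k \<le> m"
  have "(\<Sum>k<Suc k. a k) = 0" using assms k by auto
  moreover have "(\<Sum>k<k. a k) = 0"
  proof (cases "k = 0")
    case False then show ?thesis using assms k by auto
  qed simp
  ultimately show "a k = 0" by auto
qed

lemma indep_struct:
  fixes g :: "nat \<Rightarrow> 'i \<Rightarrow> real"
  assumes gs: "\<forall>k\<le>m. \<forall>i. g k i = (if k < \<rho> i then real (c i) else 0)"
    and rb: "\<forall>i. \<rho> i \<le> Suc m"
    and surj: "\<forall>r. 1 \<le> r \<and> r \<le> m \<longrightarrow> (\<exists>i. \<rho> i = r \<and> 0 < c i)"
    and h1: "\<forall>i. (\<Sum>k\<le>m. a k * g k i) = 0" and h2: "(\<Sum>k\<le>m. a k) = 0"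
  shows "\<forall>k\<le>m. a k = 0"
proof (rule partial_sums_zero, intro allI impI)
  fix r assume r: "1 \<le> r \<and> r \<le> Suc m"
  show "(\<Sum>k<r. a k) = 0"
  proof (cases "r = Suc m")
    case True then show ?thesis using h2 by (simp add: lessThan_Suc_atMost)
  next
    case False
    then obtain i where i: "\<rho> i = r" "0 < c i" using surj r by fastforce
    have "real (c i) * (\<Sum>k<\<rho> i. a k) = 0"
      using struct_sum[OF gs, of i a] rb h1 by simp
    then show ?thesis using i by simp
  qed
qed

lemma Gcd_cond:
  fixes B :: "nat set" and a :: real
  assumes "finite B"
  shows "(\<forall>b\<in>B. real b * a \<in> \<int>) \<longleftrightarrow> real (Gcd B) * a \<in> \<int>"
  using assms
proof (induction B rule: finite_induct)
  case empty then show ?case by simp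
next
  case (insert x B)
  have key: "(real p * a \<in> \<int> \<and> real q * a \<in> \<int>) \<longleftrightarrow> real (gcd p q) * a \<in> \<int>" for p q :: nat
  proof
    assume h: "real p * a \<in> \<int> \<and> real q * a \<in> \<int>"
    obtain u v :: int where uv: "u * int p + v * int q = gcd (int p) (int q)"
      using bezout_int by blast
    have "real (gcd p q) = of_int u * real p + of_int v * real q"
      using arg_cong[OF uv, of real_of_int] by (simp add: gcd_int_int_eq)
    then have "real (gcd p q) * a = of_int u * (real p * a) + of_int v * (real q * a)"
      by (simp add: algebra_simps)
    then show "real (gcd p q) * a \<in> \<int>" using h by (simp add: Ints_add Ints_mult)
  next
    assume h: "real (gcd p q) * a \<in> \<int>"
    obtain p' where p': "p = gcd p q * p'" by (meson gcd_dvd1 dvdE)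
    obtain q' where q': "q = gcd p q * q'" by (meson gcd_dvd2 dvdE)
    have "real p = real (gcd p q) * real p'" using p' by (metis of_nat_mult)
    then have e1: "real p * a = real p' * (real (gcd p q) * a)" by (simp add: algebra_simps)
    have "real q = real (gcd p q) * real q'" using q' by (metis of_nat_mult)
    then have e2: "real q * a = real q' * (real (gcd p q) * a)" by (simp add: algebra_simps)
    show "real p * a \<in> \<int> \<and> real q * a \<in> \<int>" unfolding e1 e2 using h by (meson Ints_mult Ints_of_nat)
  qed
  show ?case using insert key[of x "Gcd B"] by simp
qed

lemma downclosed:
  fixes D :: "nat set"
  assumes "D \<subseteq> {..p}" and "\<And>k k'. k \<in> D \<Longrightarrow> k' \<le> k \<Longrightarrow> k' \<in> D"
  shows "D = {..<card D}"
proof (cases "D = {}")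
  case True then show ?thesis by simp
next
  case False
  have fin: "finite D" using assms(1) finite_subset by blast
  have "D = {..Max D}" using assms(2) Max_ge[OF fin] Max_in[OF fin False] by auto
  then have "D = {..<Suc (Max D)}" by (simp add: lessThan_Suc_atMost[symmetric])
  then show ?thesis by (metis card_lessThan)
qed

lemma split_lemma0:
  fixes t w :: real
  assumes "0 < t" "t < 1"
  shows "(1 - t) * max ((w - t) / (1 - t)) 0 + t * min (w / t) 1 = w"
proof (cases "w \<le> t")
  case True
  have "(w - t) / (1 - t) \<le> 0" using True assms by (simp add: divide_nonpos_pos)
  moreover have "w / t \<le> 1" using True assms by simp
  ultimately show ?thesis using assms by (simp add: max_def min_def)
next
  case False
  have "(w - t) / (1 - t) > 0" using False assms by simp
  moreover have "w / t \<ge> 1" using False assms by simp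
  ultimately show ?thesis using assms by (simp add: max_def min_def)
qed

lemma split_lemma:
  fixes t y c :: real
  assumes "0 < t" "t < 1" "0 < c"
  shows "(1 - t) * (c * max ((y / c - t) / (1 - t)) 0) + t * (c * min (y / c / t) 1) = y"
proof -
  have "(1 - t) * (c * max ((y / c - t) / (1 - t)) 0) + t * (c * min (y / c / t) 1)
     = c * ((1 - t) * max ((y / c - t) / (1 - t)) 0 + t * min (y / c / t) 1)" by (simp add: algebra_simps)
  also have "\<dots> = c * (y / c)" using split_lemma0[OF assms(1,2), of "y/c"] by simp
  also have "\<dots> = y" using assms by simp
  finally show ?thesis .
qed

lemma fa_props:
  fixes t y z :: real
  assumes "0 < t" "t < 1" "0 \<le> y" "y \<le> z" "z \<le> 1"
  shows "0 \<le> max ((y - t) / (1 - t)) 0" "max ((y - t) / (1 - t)) 0 \<le> max ((z - t) / (1 - t)) 0"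
    "max ((z - t) / (1 - t)) 0 \<le> 1"
    "0 \<le> min (y / t) 1" "min (y / t) 1 \<le> min (z / t) 1" "min (z / t) 1 \<le> 1"
proof -
  show "0 \<le> max ((y - t) / (1 - t)) 0" by simp
  have "(y - t) / (1 - t) \<le> (z - t) / (1 - t)" using assms by (simp add: divide_right_mono)
  then show "max ((y - t) / (1 - t)) 0 \<le> max ((z - t) / (1 - t)) 0" by simp
  have "(z - t) / (1 - t) \<le> 1" using assms by simp
  then show "max ((z - t) / (1 - t)) 0 \<le> 1" by simp
  show "0 \<le> min (y / t) 1" using assms by simp
  have "y / t \<le> z / t" using assms by (simp add: divide_right_mono)
  then show "min (y / t) 1 \<le> min (z / t) 1" by simp
  show "min (z / t) 1 \<le> 1" by simp
qed



lemma conv_top: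
  fixes t a b M :: real
  assumes "0 < t" "t < 1" "a \<le> M" "b \<le> M" "(1 - t) * a + t * b = M"
  shows "a = M \<and> b = M"
proof -
  have h1: "(1 - t) * (M - a) \<ge> 0" using assms by simp
  have h2: "t * (M - b) \<ge> 0" using assms by simp
  have "(1 - t) * (M - a) + t * (M - b) = 0" using assms(5) by (simp add: algebra_simps)
  then have "(1 - t) * (M - a) = 0" "t * (M - b) = 0" using h1 h2 by linarith+
  then show ?thesis using assms(1,2) by simp
qed

definition uvert :: "nat \<Rightarrow> (nat \<Rightarrow> nat) \<Rightarrow> nat \<Rightarrow> nat \<Rightarrow> real" where
  "uvert m \<mu> k = (\<lambda>i. if k \<le> i \<and> i < m then real (\<mu> i) else 0)"

lemma lhn_bounds:
  assumes "x \<in> lecture_hall_nat m \<mu>" "i < m" "0 < \<mu> i"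
  shows "0 \<le> x i" "x i \<le> real (\<mu> i)"
  using assms unfolding lecture_hall_nat_def by (auto simp: divide_le_eq_1 zero_le_divide_iff)

lemma uvert_in:
  assumes "k \<le> m" "\<forall>i<m. 0 < \<mu> i"
  shows "uvert m \<mu> k \<in> lecture_hall_nat m \<mu>"
  using assms unfolding lecture_hall_nat_def uvert_def by auto

lemma uvert_ext:
  assumes "k \<le> m" "\<forall>i<m. 0 < \<mu> i"
  shows "uvert m \<mu> k \<in> ext_pts (lecture_hall_nat m \<mu>)"
  unfolding ext_pts_def
proof (intro CollectI conjI notI)
  show "uvert m \<mu> k \<in> lecture_hall_nat m \<mu>" by (rule uvert_in[OF assms])
  assume "\<exists>a\<in>lecture_hall_nat m \<mu>. \<exists>b\<in>lecture_hall_nat m \<mu>. \<exists>u. a \<noteq> b \<and> 0 < u \<and> u < 1 \<and>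
             uvert m \<mu> k = (\<lambda>i. (1 - u) * a i + u * b i)"
  then obtain a b t where a: "a \<in> lecture_hall_nat m \<mu>" and b: "b \<in> lecture_hall_nat m \<mu>"
    and ab: "a \<noteq> b" and t: "0 < t" "t < 1" and eq: "uvert m \<mu> k = (\<lambda>i. (1 - t) * a i + t * b i)"
    by blast
  have "a i = b i" for i
  proof (cases "i < m")
    case False then show ?thesis using a b unfolding lecture_hall_nat_def by auto
  next
    case True
    have e: "(1 - t) * a i + t * b i = uvert m \<mu> k i" using eq by metis
    note ba = lhn_bounds[OF a True] lhn_bounds[OF b True]
    show ?thesis
    proof (cases "k \<le> i")
      case True
      then have "(1 - t) * a i + t * b i = real (\<mu> i)" using e \<open>i < m\<close> by (simp add: uvert_def)
      then show ?thesis using conv_top[OF t, of "a i" "real (\<mu> i)" "b i"] ba assms(2) \<open>i < m\<close> by auto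
    next
      case False
      then have "(1 - t) * (- a i) + t * (- b i) = 0" using e \<open>i < m\<close> by (simp add: uvert_def)
      then show ?thesis using conv_top[OF t, of "- a i" 0 "- b i"] ba assms(2) \<open>i < m\<close> by auto
    qed
  qed
  then show False using ab by auto
qed

lemma ext_01:
  assumes x: "x \<in> ext_pts (lecture_hall_nat m \<mu>)" and mu: "\<forall>i<m. 0 < \<mu> i" and i: "i < m"
  shows "x i = 0 \<or> x i = real (\<mu> i)"
proof (rule ccontr)
  assume nz: "\<not> (x i = 0 \<or> x i = real (\<mu> i))"
  have xP: "x \<in> lecture_hall_nat m \<mu>" using x unfolding ext_pts_def by auto
  define t where "t = x i / real (\<mu> i)"
  have mui: "0 < real (\<mu> i)" using mu i by simp
  have "0 \<le> t" "t \<le> 1" using xP i unfolding t_def lecture_hall_nat_def by auto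
  moreover have "t \<noteq> 0" "t \<noteq> 1" using nz mui unfolding t_def by auto
  ultimately have t0: "0 < t" and t1: "t < 1" by auto
  define fa where "fa = (\<lambda>y::real. max ((y - t) / (1 - t)) 0)"
  define fb where "fb = (\<lambda>y::real. min (y / t) 1)"
  define a where "a = (\<lambda>j. real (\<mu> j) * fa (x j / real (\<mu> j)))"
  define b where "b = (\<lambda>j. real (\<mu> j) * fb (x j / real (\<mu> j)))"
  have fa0: "fa 0 = 0" using t0 t1 unfolding fa_def by (simp add: divide_nonpos_pos)
  have fb0: "fb 0 = 0" unfolding fb_def by simp
  have x0: "x j = 0" if "m \<le> j" for j using xP that unfolding lecture_hall_nat_def by auto
  have yb: "0 \<le> x j / real (\<mu> j) \<and> x j / real (\<mu> j) \<le> 1" if "j < m" for j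
    using xP that unfolding lecture_hall_nat_def by auto
  have ym: "x j / real (\<mu> j) \<le> x k / real (\<mu> k)" if "j \<le> k" "k < m" for j k
    using xP that unfolding lecture_hall_nat_def by auto
  have aj: "a j / real (\<mu> j) = fa (x j / real (\<mu> j))" if "j < m" for j
    using mu that unfolding a_def by simp
  have bj: "b j / real (\<mu> j) = fb (x j / real (\<mu> j))" if "j < m" for j
    using mu that unfolding b_def by simp
  have aP: "a \<in> lecture_hall_nat m \<mu>"
    unfolding lecture_hall_nat_def
  proof (intro CollectI conjI allI impI)
    fix j assume "m \<le> j" then show "a j = 0" unfolding a_def using x0 fa0 by simp
  next
    fix j assume j: "j < m"
    show "0 \<le> a j / real (\<mu> j)" "a j / real (\<mu> j) \<le> 1"
      using aj[OF j] fa_props(1,3)[OF t0 t1, of "x j / real (\<mu> j)" "x j / real (\<mu> j)"] yb[OF j]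
      unfolding fa_def by auto
  next
    fix j k assume jk: "j \<le> k \<and> k < m"
    show "a j / real (\<mu> j) \<le> a k / real (\<mu> k)"
      using aj[of j] aj[of k] jk fa_props(2)[OF t0 t1, of "x j / real (\<mu> j)" "x k / real (\<mu> k)"]
        yb[of j] yb[of k] ym[of j k] unfolding fa_def by auto
  qed
  have bP: "b \<in> lecture_hall_nat m \<mu>"
    unfolding lecture_hall_nat_def
  proof (intro CollectI conjI allI impI)
    fix j assume "m \<le> j" then show "b j = 0" unfolding b_def using x0 fb0 by simp
  next
    fix j assume j: "j < m"
    show "0 \<le> b j / real (\<mu> j)" "b j / real (\<mu> j) \<le> 1"
      using bj[OF j] fa_props(4,6)[OF t0 t1, of "x j / real (\<mu> j)" "x j / real (\<mu> j)"] yb[OF j]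
      unfolding fb_def by auto
  next
    fix j k assume jk: "j \<le> k \<and> k < m"
    show "b j / real (\<mu> j) \<le> b k / real (\<mu> k)"
      using bj[of j] bj[of k] jk fa_props(5)[OF t0 t1, of "x j / real (\<mu> j)" "x k / real (\<mu> k)"]
        yb[of j] yb[of k] ym[of j k] unfolding fb_def by auto
  qed
  have xeq: "x = (\<lambda>j. (1 - t) * a j + t * b j)"
  proof
    fix j show "x j = (1 - t) * a j + t * b j"
    proof (cases "j < m")
      case True
      then show ?thesis using split_lemma[OF t0 t1, of "real (\<mu> j)" "x j"] mu
        unfolding a_def b_def fa_def fb_def by simp
    next
      case False then show ?thesis using x0 fa0 fb0 unfolding a_def b_def by simp
    qed
  qed
  have "a i = 0" unfolding a_def fa_def t_def by simp
  moreover have "b i = real (\<mu> i)"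
  proof -
    have "fb t = 1" unfolding fb_def using t0 by simp
    then show ?thesis unfolding b_def t_def by simp
  qed
  ultimately have "a \<noteq> b" using mui by auto
  then show False using x aP bP xeq t0 t1 unfolding ext_pts_def by blast
qed

lemma ext_sub:
  assumes x: "x \<in> ext_pts (lecture_hall_nat m \<mu>)" and mu: "\<forall>i<m. 0 < \<mu> i"
  shows "x \<in> uvert m \<mu> ` {..m}"
proof -
  have xP: "x \<in> lecture_hall_nat m \<mu>" using x unfolding ext_pts_def by auto
  define D where "D = {i. i < m \<and> x i = 0}"
  have Dsub: "D \<subseteq> {..m}" unfolding D_def by auto
  have "D = {..<card D}"
  proof (rule downclosed[OF Dsub])
    fix j k assume j: "j \<in> D" and kj: "k \<le> j"
    have jm: "j < m" and xj: "x j = 0" using j unfolding D_def by auto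
    have "x k / real (\<mu> k) \<le> x j / real (\<mu> j)" "0 \<le> x k / real (\<mu> k)"
      using xP kj jm unfolding lecture_hall_nat_def by auto
    then have "x k / real (\<mu> k) = 0" using j unfolding D_def by auto
    moreover have "0 < \<mu> k" using mu kj jm by auto
    ultimately show "k \<in> D" using kj jm unfolding D_def by auto
  qed
  then have Dk: "\<And>i. i \<in> D \<longleftrightarrow> i < card D" by blast
  have km: "card D \<le> m"
  proof -
    have "D \<subseteq> {..<m}" unfolding D_def by auto
    then show ?thesis by (metis card_lessThan card_mono finite_lessThan)
  qed
  have "x = uvert m \<mu> (card D)"
  proof
    fix i show "x i = uvert m \<mu> (card D) i"
    proof (cases "i < m")
      case True
      show ?thesis
      proof (cases "i < card D")
        case True
        then have "x i = 0" using Dk unfolding D_def by blast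
        then show ?thesis using True by (simp add: uvert_def)
      next
        case False
        then have "x i \<noteq> 0" using Dk \<open>i < m\<close> unfolding D_def by blast
        then have "x i = real (\<mu> i)" using ext_01[OF x mu \<open>i < m\<close>] by auto
        then show ?thesis using False \<open>i < m\<close> by (simp add: uvert_def)
      qed
    next
      case False then show ?thesis using xP unfolding lecture_hall_nat_def uvert_def by auto
    qed
  qed
  then show ?thesis using km by auto
qed

lemma ext_eq:
  assumes mu: "\<forall>i<m. 0 < \<mu> i"
  shows "ext_pts (lecture_hall_nat m \<mu>) = uvert m \<mu> ` {..m}"
  using ext_sub[OF _ mu] uvert_ext[OF _ mu] by blast

lemma uvert_struct:
  "\<forall>k\<le>m. \<forall>i. uvert m \<mu> k i = (if k < (if i < m then Suc i else 0) then real (\<mu> i) else 0)"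
  unfolding uvert_def by auto

lemma uvert_inj:
  assumes mu: "\<forall>i<m. 0 < \<mu> i"
  shows "inj_on (uvert m \<mu>) {..m}"
proof (rule inj_onI)
  fix k k' assume k: "k \<in> {..m}" and k': "k' \<in> {..m}" and eq: "uvert m \<mu> k = uvert m \<mu> k'"
  show "k = k'"
  proof (rule ccontr)
    assume "k \<noteq> k'"
    then consider "k < k'" | "k' < k" by linarith
    then show False
    proof cases
      case 1
      then have "uvert m \<mu> k k \<noteq> uvert m \<mu> k' k" using mu k' unfolding uvert_def by auto
      then show False using eq by simp
    next
      case 2
      then have "uvert m \<mu> k k' \<noteq> uvert m \<mu> k' k'" using mu k unfolding uvert_def by auto
      then show False using eq by simp
    qed
  qed
qed

lemma d_poly_param:
  assumes mu: "\<forall>i<m. 0 < \<mu> i"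
  shows "d_poly m \<mu> = (\<Sum>l\<in>Lam (uvert m \<mu>) m. monom 1 (nat \<lfloor>\<Sum>k\<le>m. l k\<rfloor>))"
  unfolding d_poly_def ext_eq[OF mu]
proof (rule lstar_param[OF uvert_inj[OF mu] refl])
  fix a assume h1: "\<forall>i. (\<Sum>k\<le>m. a k * uvert m \<mu> k i) = 0" and h2: "(\<Sum>k\<le>m. a k) = 0"
  show "\<forall>k\<le>m. a k = 0"
  proof (rule indep_struct[OF uvert_struct _ _ h1 h2])
    show "\<forall>i. (if i < m then Suc i else 0) \<le> Suc m" by auto
    show "\<forall>r. 1 \<le> r \<and> r \<le> m \<longrightarrow> (\<exists>i. (if i < m then Suc i else 0) = r \<and> 0 < \<mu> i)"
    proof (intro allI impI)
      fix r assume r: "1 \<le> r \<and> r \<le> m"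
      then show "\<exists>i. (if i < m then Suc i else 0) = r \<and> 0 < \<mu> i"
        using mu by (intro exI[of _ "r - 1"]) auto
    qed
  qed
qed



lemma lh_convex:
  fixes s :: "'n::{finite,linorder} \<Rightarrow> nat"
  assumes spos: "\<forall>i. 0 < s i"
  shows "convex (lecture_hall s)"
proof (rule convexI)
  fix x y and u v :: real
  assume x: "x \<in> lecture_hall s" and y: "y \<in> lecture_hall s" and u0: "0 \<le> u" and v0: "0 \<le> v" and uv1: "u + v = 1"
  have uv: "0 \<le> u \<and> 0 \<le> v \<and> u + v = 1" using u0 v0 uv1 by simp
  have c: "(u *\<^sub>R x + v *\<^sub>R y) $ i / real (s i) = u * (x$i / real (s i)) + v * (y$i / real (s i))" for i
    by (simp add: add_divide_distrib)
  have xb: "0 \<le> x$i / real (s i)" "x$i / real (s i) \<le> 1" and yb: "0 \<le> y$i / real (s i)" "y$i / real (s i) \<le> 1" for i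
    using x y unfolding lecture_hall_def by auto
  have xm: "x$i / real (s i) \<le> x$j / real (s j)" and ym: "y$i / real (s i) \<le> y$j / real (s j)" if "i \<le> j" for i j
    using x y that unfolding lecture_hall_def by auto
  show "u *\<^sub>R x + v *\<^sub>R y \<in> lecture_hall s"
    unfolding lecture_hall_def
  proof (intro CollectI conjI allI impI)
    fix i
    show "0 \<le> (u *\<^sub>R x + v *\<^sub>R y) $ i / real (s i)" unfolding c using uv xb yb
      by (intro add_nonneg_nonneg mult_nonneg_nonneg) auto
    have "u * (x$i / real (s i)) + v * (y$i / real (s i)) \<le> u * 1 + v * 1"
      using uv xb yb by (intro add_mono mult_left_mono) auto
    then show "(u *\<^sub>R x + v *\<^sub>R y) $ i / real (s i) \<le> 1" unfolding c using uv by simp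
  next
    fix i j :: 'n assume ij: "i \<le> j"
    show "(u *\<^sub>R x + v *\<^sub>R y) $ i / real (s i) \<le> (u *\<^sub>R x + v *\<^sub>R y) $ j / real (s j)"
      unfolding c using uv xm[OF ij] ym[OF ij] by (intro add_mono mult_left_mono) auto
  qed
qed

lemma lh_compact:
  fixes s :: "'n::{finite,linorder} \<Rightarrow> nat"
  assumes spos: "\<forall>i. 0 < s i"
  shows "compact (lecture_hall s)"
proof -
  have eq: "lecture_hall s = (\<Inter>i. {x. 0 \<le> x$i / real (s i)} \<inter> {x. x$i / real (s i) \<le> 1}) \<inter>
     (\<Inter>(i,j)\<in>{(i,j). i \<le> j}. {x. x$i / real (s i) \<le> x$j / real (s j)})"
    unfolding lecture_hall_def by auto
  have nz: "\<And>i. s i \<noteq> 0" using spos by (metis less_irrefl)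
  have "closed (lecture_hall s)" unfolding eq
    by (intro closed_Int closed_INT ballI closed_Collect_le continuous_intros) (auto intro!: closed_Collect_le continuous_intros simp: nz)
  moreover have "lecture_hall s \<subseteq> cbox 0 (\<chi> i. real (s i))"
  proof
    fix x assume x: "x \<in> lecture_hall s"
    have "0 \<le> x$i \<and> x$i \<le> real (s i)" for i
      using x spos[rule_format, of i] unfolding lecture_hall_def by (auto simp: divide_le_eq_1 zero_le_divide_iff)
    then show "x \<in> cbox 0 (\<chi> i. real (s i))" unfolding mem_box_cart by simp
  qed
  then have "bounded (lecture_hall s)" using bounded_cbox bounded_subset by blast
  ultimately show ?thesis using compact_eq_bounded_closed by blast
qed

lemma ext_vert_lh:
  fixes s :: "'n::{finite,linorder} \<Rightarrow> nat"
  assumes spos: "\<forall>i. 0 < s i" and v: "v extreme_point_of (lecture_hall s)"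
  shows "v$i = 0 \<or> v$i = real (s i)"
proof (rule ccontr)
  assume nz: "\<not> (v$i = 0 \<or> v$i = real (s i))"
  have xP: "v \<in> lecture_hall s" using v unfolding extreme_point_of_def by auto
  define t where "t = v$i / real (s i)"
  have si: "0 < real (s i)" using spos by simp
  have "0 \<le> t" "t \<le> 1" using xP unfolding t_def lecture_hall_def by auto
  moreover have "t \<noteq> 0" "t \<noteq> 1" using nz si unfolding t_def by auto
  ultimately have t0: "0 < t" and t1: "t < 1" by auto
  define fa where "fa = (\<lambda>y::real. max ((y - t) / (1 - t)) 0)"
  define fb where "fb = (\<lambda>y::real. min (y / t) 1)"
  define a where "a = (\<chi> j. real (s j) * fa (v$j / real (s j)))"
  define b where "b = (\<chi> j. real (s j) * fb (v$j / real (s j)))"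
  have yb: "0 \<le> v$j / real (s j) \<and> v$j / real (s j) \<le> 1" for j
    using xP unfolding lecture_hall_def by auto
  have ym: "v$j / real (s j) \<le> v$k / real (s k)" if "j \<le> k" for j k
    using xP that unfolding lecture_hall_def by auto
  have aj: "a$j / real (s j) = fa (v$j / real (s j))" for j
    using spos unfolding a_def by (simp add: nonzero_mult_div_cancel_left)
  have bj: "b$j / real (s j) = fb (v$j / real (s j))" for j
    using spos unfolding b_def by (simp add: nonzero_mult_div_cancel_left)
  have aP: "a \<in> lecture_hall s"
    unfolding lecture_hall_def
  proof (intro CollectI conjI allI impI)
    fix j
    show "0 \<le> a$j / real (s j)" "a$j / real (s j) \<le> 1"
      using aj[of j] fa_props(1,3)[OF t0 t1, of "v$j / real (s j)" "v$j / real (s j)"] yb[of j]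
      unfolding fa_def by auto
  next
    fix j k :: 'n assume jk: "j \<le> k"
    show "a$j / real (s j) \<le> a$k / real (s k)"
      using aj[of j] aj[of k] fa_props(2)[OF t0 t1, of "v$j / real (s j)" "v$k / real (s k)"]
        yb[of j] yb[of k] ym[OF jk] unfolding fa_def by auto
  qed
  have bP: "b \<in> lecture_hall s"
    unfolding lecture_hall_def
  proof (intro CollectI conjI allI impI)
    fix j
    show "0 \<le> b$j / real (s j)" "b$j / real (s j) \<le> 1"
      using bj[of j] fa_props(4,6)[OF t0 t1, of "v$j / real (s j)" "v$j / real (s j)"] yb[of j]
      unfolding fb_def by auto
  next
    fix j k :: 'n assume jk: "j \<le> k"
    show "b$j / real (s j) \<le> b$k / real (s k)"
      using bj[of j] bj[of k] fa_props(5)[OF t0 t1, of "v$j / real (s j)" "v$k / real (s k)"]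
        yb[of j] yb[of k] ym[OF jk] unfolding fb_def by auto
  qed
  have veq: "v = (1 - t) *\<^sub>R a + t *\<^sub>R b"
  proof (subst vec_eq_iff, intro allI)
    fix j show "v$j = ((1 - t) *\<^sub>R a + t *\<^sub>R b)$j"
      using split_lemma[OF t0 t1, of "real (s j)" "v$j"] spos
      unfolding a_def b_def fa_def fb_def by simp
  qed
  have "a$i = 0" unfolding a_def fa_def t_def by simp
  moreover have "b$i = real (s i)"
  proof -
    have "fb t = 1" unfolding fb_def using t0 by simp
    then show ?thesis unfolding b_def t_def by simp
  qed
  ultimately have "a \<noteq> b" using si by auto
  then have "v \<in> open_segment a b" using veq t0 t1 unfolding in_segment by blast
  then show False using v aP bP unfolding extreme_point_of_def by blast
qed

lemma sort_desc:
  fixes \<sigma> :: "'a \<Rightarrow> nat"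
  assumes fin: "finite E" and inj: "inj_on \<sigma> E"
  obtains e where "bij_betw e {..<card E} E" "\<And>k k'. k < k' \<Longrightarrow> k' < card E \<Longrightarrow> \<sigma> (e k') < \<sigma> (e k)"
proof -
  define n where "n = card E"
  define xs where "xs = sorted_list_of_set (\<sigma> ` E)"
  have len: "length xs = n" unfolding xs_def n_def using card_image[OF inj] by simp
  have setxs: "set xs = \<sigma> ` E" unfolding xs_def using fin by simp
  have ss: "sorted_wrt (<) xs" unfolding xs_def by (rule strict_sorted_list_of_set)
  define e where "e = (\<lambda>k. inv_into E \<sigma> (xs ! (n - 1 - k)))"
  have mem: "xs ! (n - 1 - k) \<in> \<sigma> ` E" if "k < n" for k
    using setxs len that by (metis diff_less less_imp_diff_less nth_mem zero_less_one less_nat_zero_code not_gr_zero)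
  have eE: "e k \<in> E" if "k < n" for k unfolding e_def using mem[OF that] by (rule inv_into_into)
  have se: "\<sigma> (e k) = xs ! (n - 1 - k)" if "k < n" for k unfolding e_def using mem[OF that] by (rule f_inv_into_f)
  have mono: "\<sigma> (e k') < \<sigma> (e k)" if "k < k'" "k' < n" for k k'
  proof -
    have "xs ! (n - 1 - k') < xs ! (n - 1 - k)"
      using sorted_wrt_nth_less[OF ss, of "n - 1 - k'" "n - 1 - k"] that len by simp
    then show ?thesis using se that by simp
  qed
  have injE: "inj_on e {..<n}"
  proof (rule inj_onI)
    fix k k' assume k: "k \<in> {..<n}" and k': "k' \<in> {..<n}" and eq: "e k = e k'"
    show "k = k'"
    proof (rule ccontr)
      assume "k \<noteq> k'"
      then consider "k < k'" | "k' < k" by linarith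
      then show False using mono k k' eq by cases (metis lessThan_iff less_irrefl)+
    qed
  qed
  have img: "e ` {..<n} = E"
  proof
    show "e ` {..<n} \<subseteq> E" using eE by auto
    show "E \<subseteq> e ` {..<n}"
    proof
      fix v assume v: "v \<in> E"
      then have "\<sigma> v \<in> set xs" using setxs by auto
      then obtain j where j: "j < n" "xs ! j = \<sigma> v" using len by (metis in_set_conv_nth)
      define k where "k = n - 1 - j"
      have k: "k < n" "n - 1 - k = j" unfolding k_def using j by auto
      have "e k = v" unfolding e_def k(2) j(2) using inv_into_f_f[OF inj v] .
      then show "v \<in> e ` {..<n}" using k by auto
    qed
  qed
  show ?thesis
    using that[of e] injE img mono unfolding bij_betw_def n_def by blast
qed



theorem theorem5p5:
  fixes s :: "'n::{finite,linorder} \<Rightarrow> nat" and F :: "(real^('n::{finite,linorder})) set" and m :: nat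
  assumes "\<forall>i. 0 < s i"
    and "F face_of lecture_hall s"
    and "F \<noteq> {}"
    and "aff_dim F = int m"
  shows "\<exists>\<mu>::nat \<Rightarrow> nat. (\<forall>i<m. 0 < \<mu> i) \<and> ell_star F = d_poly m \<mu>"
proof -
  note spos = assms(1) and face = assms(2) and Fne = assms(3) and aff = assms(4)
  have cvx: "convex (lecture_hall s)" by (rule lh_convex[OF spos])
  have cpt: "compact (lecture_hall s)" by (rule lh_compact[OF spos])
  have Fc: "compact F" by (rule face_of_imp_compact[OF cvx cpt face])
  have Fcv: "convex F" by (rule face_of_imp_convex[OF face])
  define E where "E = {v. v extreme_point_of F}"
  have KM: "F = convex hull E" unfolding E_def by (rule Krein_Milman_Minkowski[OF Fc Fcv])
  have EP: "v extreme_point_of (lecture_hall s)" if "v \<in> E" for v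
    using extreme_point_of_face[OF face] that unfolding E_def by auto
  have Evert: "v$i = 0 \<or> v$i = real (s i)" if "v \<in> E" for v i
    by (rule ext_vert_lh[OF spos EP[OF that]])
  have EinP: "v \<in> lecture_hall s" if "v \<in> E" for v
    using EP[OF that] unfolding extreme_point_of_def by auto
  define supp where "supp = (\<lambda>v::(real,'n) vec. {i. v$i \<noteq> 0})"
  have Erep: "v = (\<chi> i. if i \<in> supp v then real (s i) else 0)" if "v \<in> E" for v
    unfolding vec_eq_iff supp_def using Evert[OF that] by auto
  have Eup: "j \<in> supp v" if "v \<in> E" "i \<in> supp v" "i \<le> j" for v i j
  proof -
    have vi: "v$i = real (s i)" using Evert[OF that(1), of i] that(2) unfolding supp_def by auto
    have "v$i / real (s i) \<le> v$j / real (s j)" using EinP[OF that(1)] that(3) unfolding lecture_hall_def by auto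
    moreover have "v$i / real (s i) = 1" using vi spos by simp
    ultimately have "v$j \<noteq> 0" by auto
    then show ?thesis unfolding supp_def by simp
  qed
  have Efin: "finite E"
  proof (rule finite_subset)
    show "E \<subseteq> (\<lambda>A. \<chi> i. if i \<in> A then real (s i) else 0) ` UNIV" using Erep by blast
  qed simp
  have chain: "supp v \<subseteq> supp w \<or> supp w \<subseteq> supp v" if "v \<in> E" "w \<in> E" for v w
  proof (rule ccontr)
    assume "\<not> (supp v \<subseteq> supp w \<or> supp w \<subseteq> supp v)"
    then obtain a b where a: "a \<in> supp v" "a \<notin> supp w" and b: "b \<in> supp w" "b \<notin> supp v" by blast
    show False
    proof (cases "a \<le> b")
      case True then show False using Eup[OF that(1) a(1)] b by blast
    next
      case False then have "b \<le> a" by simp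
      then show False using Eup[OF that(2) b(1)] a by blast
    qed
  qed
  define \<sigma> where "\<sigma> = (\<lambda>v. card (supp v))"
  have sinj: "inj_on \<sigma> E"
  proof (rule inj_onI)
    fix v w assume v: "v \<in> E" and w: "w \<in> E" and eq: "\<sigma> v = \<sigma> w"
    have eqc: "card (supp v) = card (supp w)" using eq unfolding \<sigma>_def by simp
    from chain[OF v w] have "supp v = supp w"
    proof
      assume "supp v \<subseteq> supp w"
      then show ?thesis using card_subset_eq[of "supp w" "supp v"] eqc by simp
    next
      assume "supp w \<subseteq> supp v"
      then show ?thesis using card_subset_eq[of "supp v" "supp w"] eqc by simp
    qed
    then show "v = w" using Erep[OF v] Erep[OF w] by simp
  qed
  obtain e0 where bij0: "bij_betw e0 {..<card E} E"
    and dec: "\<And>k k'. k < k' \<Longrightarrow> k' < card E \<Longrightarrow> \<sigma> (e0 k') < \<sigma> (e0 k)"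
    using sort_desc[OF Efin sinj] by blast
  have Ene: "E \<noteq> {}"
  proof
    assume "E = {}"
    then have "F = {}" using KM by simp
    then show False using Fne by contradiction
  qed
  define p where "p = card E - 1"
  have "card E > 0" using Efin Ene card_gt_0_iff by blast
  then have cardE: "card E = Suc p" unfolding p_def by simp
  have bij: "bij_betw e0 {..p} E" using bij0 unfolding cardE lessThan_Suc_atMost .
  have e0E: "e0 k \<in> E" if "k \<le> p" for k using bij_betwE[OF bij] that by simp
  have suppdec: "supp (e0 k') \<subseteq> supp (e0 k) \<and> supp (e0 k') \<noteq> supp (e0 k)" if "k < k'" "k' \<le> p" for k k'
  proof -
    have lt: "card (supp (e0 k')) < card (supp (e0 k))" using dec[of k k'] that cardE unfolding \<sigma>_def by simp
    have "\<not> supp (e0 k) \<subseteq> supp (e0 k')"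
    proof
      assume "supp (e0 k) \<subseteq> supp (e0 k')"
      then have "card (supp (e0 k)) \<le> card (supp (e0 k'))" by (intro card_mono) simp_all
      then show False using lt by linarith
    qed
    moreover have "k \<le> p" using that by linarith
    ultimately have "supp (e0 k') \<subseteq> supp (e0 k)" using chain[OF e0E[of k'] e0E[of k]] that(2) by blast
    then show ?thesis using lt by force
  qed
  define \<rho> where "\<rho> = (\<lambda>i. card {k. k \<le> p \<and> i \<in> supp (e0 k)})"
  have rho: "{k. k \<le> p \<and> i \<in> supp (e0 k)} = {..<\<rho> i}" for i
    unfolding \<rho>_def
  proof (rule downclosed[of _ p])
    show "{k. k \<le> p \<and> i \<in> supp (e0 k)} \<subseteq> {..p}" by auto
  next
    fix k k' assume k: "k \<in> {k. k \<le> p \<and> i \<in> supp (e0 k)}" and kk: "k' \<le> k"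
    show "k' \<in> {k. k \<le> p \<and> i \<in> supp (e0 k)}"
    proof (cases "k' = k")
      case False then have "k' < k" using kk by simp
      then show ?thesis using suppdec[of k' k] k by auto
    qed (use k in simp)
  qed
  have rho_iff: "i \<in> supp (e0 k) \<longleftrightarrow> k < \<rho> i" if "k \<le> p" for i k
    using rho[of i] that by blast
  have rho_le: "\<forall>i. \<rho> i \<le> Suc p"
  proof
    fix i
    have "{..<\<rho> i} \<subseteq> {..p}" using rho[of i] by auto
    show "\<rho> i \<le> Suc p"
    proof (rule ccontr)
      assume "\<not> \<rho> i \<le> Suc p"
      then have "Suc p \<in> {..<\<rho> i}" by simp
      with \<open>{..<\<rho> i} \<subseteq> {..p}\<close> have "Suc p \<in> {..p}" by blast
      then show False by simp
    qed
  qed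
  have gstr: "\<forall>k\<le>p. \<forall>i. vec_nth (e0 k) i = (if k < \<rho> i then real (s i) else 0)"
  proof (intro allI impI)
    fix k i assume k: "k \<le> p"
    have "e0 k $ i = (if i \<in> supp (e0 k) then real (s i) else 0)"
      using Evert[OF e0E[OF k], of i] unfolding supp_def by auto
    then show "vec_nth (e0 k) i = (if k < \<rho> i then real (s i) else 0)" using rho_iff[OF k] by simp
  qed
  have surj: "\<forall>r. 1 \<le> r \<and> r \<le> p \<longrightarrow> (\<exists>i. \<rho> i = r \<and> 0 < s i)"
  proof (intro allI impI)
    fix r assume r: "1 \<le> r \<and> r \<le> p"
    have "supp (e0 r) \<subseteq> supp (e0 (r - 1)) \<and> supp (e0 r) \<noteq> supp (e0 (r - 1))"
      using suppdec[of "r - 1" r] r by auto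
    then obtain i where i: "i \<in> supp (e0 (r - 1))" "i \<notin> supp (e0 r)" by blast
    have "r - 1 < \<rho> i" using rho_iff[of "r - 1" i] i r by auto
    moreover have "\<not> r < \<rho> i" using rho_iff[of r i] i r by auto
    ultimately have "\<rho> i = r" using r by linarith
    then show "\<exists>i. \<rho> i = r \<and> 0 < s i" using spos by blast
  qed
  have indep: "\<forall>k\<le>p. a k = 0"
    if "\<forall>i. (\<Sum>k\<le>p. a k * vec_nth (e0 k) i) = 0" "(\<Sum>k\<le>p. a k) = 0" for a
    by (rule indep_struct[OF gstr rho_le surj that])
  have sumE: "(\<Sum>v\<in>E. f v) = (\<Sum>k\<le>p. f (e0 k))" for f :: "(real,'n) vec \<Rightarrow> 'b::comm_monoid_add"
    using sum.reindex_bij_betw[OF bij, of f] by simp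
  have indepE: "\<not> affine_dependent E"
  proof
    assume "affine_dependent E"
    then obtain U where U1: "sum U E = 0" and U2: "\<exists>v\<in>E. U v \<noteq> 0" and U3: "(\<Sum>v\<in>E. U v *\<^sub>R v) = 0"
      using affine_dependent_explicit_finite[OF Efin] by blast
    have "\<forall>i. (\<Sum>k\<le>p. U (e0 k) * vec_nth (e0 k) i) = 0"
    proof
      fix i
      have "(\<Sum>v\<in>E. U v *\<^sub>R v) $ i = 0" using U3 by simp
      then have "(\<Sum>v\<in>E. U v * v $ i) = 0" by simp
      then show "(\<Sum>k\<le>p. U (e0 k) * vec_nth (e0 k) i) = 0" using sumE[of "\<lambda>v. U v * v $ i"] by simp
    qed
    moreover have "(\<Sum>k\<le>p. U (e0 k)) = 0" using U1 sumE[of U] by simp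
    ultimately have z: "\<forall>k\<le>p. U (e0 k) = 0" using indep[of "\<lambda>k. U (e0 k)"] by blast
    obtain v where v: "v \<in> E" "U v \<noteq> 0" using U2 by blast
    then obtain k where "k \<le> p" "v = e0 k" using bij unfolding bij_betw_def by auto
    then show False using z v by auto
  qed
  have "int (card E) = aff_dim E + 1" using aff_dim_affine_independent[OF indepE] by simp
  moreover have "aff_dim E = int m" using aff aff_dim_convex_hull[of E] KM by simp
  ultimately have pm: "p = m" using cardE by simp
  define g where "g = (\<lambda>k. vec_nth (e0 k))"
  have inj_g: "inj_on g {..m}"
  proof (rule inj_onI)
    fix k k' assume k: "k \<in> {..m}" and k': "k' \<in> {..m}" and eq: "g k = g k'"
    have "e0 k = e0 k'" using eq unfolding g_def by (simp add: vec_nth_inject)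
    moreover have "inj_on e0 {..p}" using bij by (rule bij_betw_imp_inj_on)
    ultimately show "k = k'" using k k' pm by (auto dest: inj_onD)
  qed
  have Vimg: "(\<lambda>v. vec_nth v) ` E = g ` {..m}"
    using bij pm unfolding g_def bij_betw_def by auto
  have ell: "ell_star F = (\<Sum>l\<in>Lam g m. monom 1 (nat \<lfloor>\<Sum>k\<le>m. l k\<rfloor>))"
    unfolding ell_star_def E_def[symmetric] Vimg
    by (rule lstar_param[OF inj_g refl]) (use indep pm g_def in blast)
  define \<mu> where "\<mu> = (\<lambda>r. Gcd (s ` {i. \<rho> i = Suc r}))"
  have mupos: "\<forall>i<m. 0 < \<mu> i"
  proof (intro allI impI)
    fix r assume r: "r < m"
    have "1 \<le> Suc r \<and> Suc r \<le> p" using r pm by simp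
    from surj[rule_format, OF this] obtain i where i: "\<rho> i = Suc r" by (elim exE conjE)
    have si: "s i \<in> s ` {i. \<rho> i = Suc r}" by (rule imageI) (simp add: i)
    have sz: "s i \<noteq> 0" using spos[rule_format, of i] by simp
    have "Gcd (s ` {i. \<rho> i = Suc r}) \<noteq> 0"
    proof
      assume "Gcd (s ` {i. \<rho> i = Suc r}) = 0"
      then have "s ` {i. \<rho> i = Suc r} \<subseteq> {0}" by (simp only: Gcd_0_iff)
      then show False using si sz by (meson singletonD subsetD)
    qed
    then show "0 < \<mu> r" unfolding \<mu>_def using gr0I by blast
  qed
  have gstr': "\<forall>k\<le>m. \<forall>i. g k i = (if k < \<rho> i then real (s i) else 0)" using gstr pm g_def by simp
  have rho_le': "\<rho> i \<le> Suc m" for i using rho_le pm by simp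
  have keyeq: "(\<forall>i. (\<Sum>k\<le>m. l k * g k i) \<in> \<int>) \<longleftrightarrow> (\<forall>i. (\<Sum>k\<le>m. l k * uvert m \<mu> k i) \<in> \<int>)"
    if tot: "(\<Sum>k\<le>m. l k) \<in> \<int>" for l
  proof -
    have L: "(\<Sum>k\<le>m. l k * g k i) = real (s i) * (\<Sum>k<\<rho> i. l k)" for i
      by (rule struct_sum[OF gstr' rho_le'])
    have R: "(\<Sum>k\<le>m. l k * uvert m \<mu> k i) = real (\<mu> i) * (\<Sum>k<(if i < m then Suc i else 0). l k)" for i
      by (rule struct_sum[OF uvert_struct]) auto
    have G: "(\<forall>b\<in>s ` {i. \<rho> i = Suc r}. real b * a \<in> \<int>) \<longleftrightarrow> real (\<mu> r) * a \<in> \<int>" for r a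
      unfolding \<mu>_def by (rule Gcd_cond) simp
    show ?thesis
    proof
      assume h: "\<forall>i. (\<Sum>k\<le>m. l k * g k i) \<in> \<int>"
      show "\<forall>i. (\<Sum>k\<le>m. l k * uvert m \<mu> k i) \<in> \<int>"
      proof
        fix i
        show "(\<Sum>k\<le>m. l k * uvert m \<mu> k i) \<in> \<int>"
        proof (cases "i < m")
          case True
          have "\<forall>b\<in>s ` {j. \<rho> j = Suc i}. real b * (\<Sum>k<Suc i. l k) \<in> \<int>"
          proof
            fix b assume "b \<in> s ` {j. \<rho> j = Suc i}"
            then obtain j where j: "b = s j" "\<rho> j = Suc i" by blast
            show "real b * (\<Sum>k<Suc i. l k) \<in> \<int>" using h[rule_format, of j] L[of j] j by simp
          qed
          then show ?thesis unfolding R using G True by simp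
        next
          case False then show ?thesis unfolding R by simp
        qed
      qed
    next
      assume h: "\<forall>i. (\<Sum>k\<le>m. l k * uvert m \<mu> k i) \<in> \<int>"
      show "\<forall>i. (\<Sum>k\<le>m. l k * g k i) \<in> \<int>"
      proof
        fix i
        show "(\<Sum>k\<le>m. l k * g k i) \<in> \<int>"
        proof (cases "\<rho> i")
          case 0 then show ?thesis unfolding L by simp
        next
          case (Suc r)
          show ?thesis
          proof (cases "r < m")
            case True
            have "real (\<mu> r) * (\<Sum>k<Suc r. l k) \<in> \<int>" using h[rule_format, of r] True unfolding R by simp
            then have "\<forall>b\<in>s ` {j. \<rho> j = Suc r}. real b * (\<Sum>k<Suc r. l k) \<in> \<int>" using G by blast
            then show ?thesis unfolding L using Suc by auto
          next
            case False
            then have "r = m" using rho_le'[of i] Suc by simp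
            then have "(\<Sum>k<\<rho> i. l k) = (\<Sum>k\<le>m. l k)" using Suc by (simp add: lessThan_Suc_atMost)
            then show ?thesis unfolding L using tot by (simp add: Ints_mult)
          qed
        qed
      qed
    qed
  qed
  have "Lam g m = Lam (uvert m \<mu>) m"
    unfolding Lam_def
  proof (rule Collect_cong)
    fix l
    show "((\<forall>k. m < k \<longrightarrow> l k = 0) \<and> (\<forall>k\<le>m. 0 < l k \<and> l k < 1) \<and>
     (\<forall>i. (\<Sum>k\<le>m. l k * g k i) \<in> \<int>) \<and> (\<Sum>k\<le>m. l k) \<in> \<int>) \<longleftrightarrow>
     ((\<forall>k. m < k \<longrightarrow> l k = 0) \<and> (\<forall>k\<le>m. 0 < l k \<and> l k < 1) \<and>
     (\<forall>i. (\<Sum>k\<le>m. l k * uvert m \<mu> k i) \<in> \<int>) \<and> (\<Sum>k\<le>m. l k) \<in> \<int>)"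
      using keyeq[of l] by blast
  qed
  then have "ell_star F = d_poly m \<mu>" using ell d_poly_param[OF mupos] by simp
  then show ?thesis using mupos by blast
qed

end
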